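(* In the standing setting below, let $x'\in\mathbb{X}$ and $y_0,y_1\in\mathbb{Y}$ with $y_0\neq y_1$, and let $f_i(x)=-c(x,y_i)+c(x',y_i)$ for $i=0,1$. If $x'$ lies in the interior of $\mathbb{X}$, then the set $\{x\in\mathbb{X}: f_0(x)\le f_1(x)\}$ has non-empty interior.
   Context: Standing setting: $\mathbb{X},\mathbb{Y}\subset\mathbb{R}^n$ are compact with non-empty interior; $c:\mathbb{X}\times\mathbb{Y}\to\mathbb{R}$ has continuous $D_xc$, $D_yc$, and continuous mixed second derivatives with $D^2_{xy}c=(D^2_{yx}c)^T$; for each $x$ the map $y\mapsto -D_xc(x,y)$ is injective on $\mathbb{Y}$ and for each $y$ the map $x\mapsto -D_yc(x,y)$ is injective on $\mathbb{X}$; $D^2_{xy}c(x,y)$ is invertible everywhere; for every $y$ the set $\{-D_yc(x,y):x\in\mathbb{X}\}$ is convex and for every $x$ the set $\{-D_xc(x,y):y\in\mathbb{Y}\}$ is convex. *)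

theory Defs
  imports "HOL-Analysis.Analysis"
begin

definition standing_setting ::
  "(real^'n) set \<Rightarrow> (real^'n) set \<Rightarrow> (real^'n \<Rightarrow> real^'n \<Rightarrow> real)
   \<Rightarrow> (real^'n \<Rightarrow> real^'n \<Rightarrow> real^'n) \<Rightarrow> (real^'n \<Rightarrow> real^'n \<Rightarrow> real^'n)
   \<Rightarrow> (real^'n \<Rightarrow> real^'n \<Rightarrow> real^'n^'n) \<Rightarrow> (real^'n \<Rightarrow> real^'n \<Rightarrow> real^'n^'n) \<Rightarrow> bool"
where
  "standing_setting X Y c Dxc Dyc Dxyc Dyxc \<longleftrightarrow>
     compact X \<and> compact Y \<and> interior X \<noteq> {} \<and> interior Y \<noteq> {} \<and>
     (\<forall>x\<in>X. \<forall>y\<in>Y. ((\<lambda>x'. c x' y) has_derivative (\<lambda>h. Dxc x y \<bullet> h)) (at x within X)) \<and>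
     (\<forall>x\<in>X. \<forall>y\<in>Y. ((\<lambda>y'. c x y') has_derivative (\<lambda>k. Dyc x y \<bullet> k)) (at y within Y)) \<and>
     continuous_on (X \<times> Y) (\<lambda>(x, y). Dxc x y) \<and>
     continuous_on (X \<times> Y) (\<lambda>(x, y). Dyc x y) \<and>
     (\<forall>x\<in>X. \<forall>y\<in>Y. ((\<lambda>y'. Dxc x y') has_derivative (\<lambda>k. Dxyc x y *v k)) (at y within Y)) \<and>
     (\<forall>x\<in>X. \<forall>y\<in>Y. ((\<lambda>x'. Dyc x' y) has_derivative (\<lambda>h. Dyxc x y *v h)) (at x within X)) \<and>
     continuous_on (X \<times> Y) (\<lambda>(x, y). Dxyc x y) \<and>
     continuous_on (X \<times> Y) (\<lambda>(x, y). Dyxc x y) \<and>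
     (\<forall>x\<in>X. \<forall>y\<in>Y. Dxyc x y = transpose (Dyxc x y)) \<and>
     (\<forall>x\<in>X. inj_on (\<lambda>y. - Dxc x y) Y) \<and>
     (\<forall>y\<in>Y. inj_on (\<lambda>x. - Dyc x y) X) \<and>
     (\<forall>x\<in>X. \<forall>y\<in>Y. invertible (Dxyc x y)) \<and>
     (\<forall>y\<in>Y. convex ((\<lambda>x. - Dyc x y) ` X)) \<and>
     (\<forall>x\<in>X. convex ((\<lambda>y. - Dxc x y) ` Y))"

end

theory Submission
  imports Defs
begin

lemma half_min_lt: "0 < (a::real) \<Longrightarrow> min d a / 2 < a"
proof -
  assume a: "0 < a"
  have "min d a \<le> a" by simp
  then show ?thesis using a by linarith
qed

theorem lemma2p18:
  fixes X Y :: "(real^'n) set"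
    and c :: "real^'n \<Rightarrow> real^'n \<Rightarrow> real"
    and Dxc Dyc :: "real^'n \<Rightarrow> real^'n \<Rightarrow> real^'n"
    and Dxyc Dyxc :: "real^'n \<Rightarrow> real^'n \<Rightarrow> real^'n^'n"
    and x' y0 y1 :: "real^'n"
  assumes "standing_setting X Y c Dxc Dyc Dxyc Dyxc"
    and "x' \<in> X" and "y0 \<in> Y" and "y1 \<in> Y" and "y0 \<noteq> y1"
    and "x' \<in> interior X"
  shows "interior {x \<in> X. - c x y0 + c x' y0 \<le> - c x y1 + c x' y1} \<noteq> {}"
proof -
  define g where "g x = - c x y0 + c x' y0 + c x y1 - c x' y1" for x
  have dx: "\<And>x y. x \<in> X \<Longrightarrow> y \<in> Y \<Longrightarrow> ((\<lambda>x'. c x' y) has_derivative (\<lambda>h. Dxc x y \<bullet> h)) (at x within X)"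
    using assms(1) unfolding standing_setting_def by blast
  have inj: "inj_on (\<lambda>y. - Dxc x' y) Y"
    using assms(1,2) unfolding standing_setting_def by blast
  have gd: "(g has_derivative (\<lambda>h. (Dxc x y1 - Dxc x y0) \<bullet> h)) (at x within X)" if "x \<in> X" for x
  proof -
    have "((\<lambda>x. - c x y0 + c x' y0 + c x y1 - c x' y1) has_derivative
        (\<lambda>h. - (Dxc x y0 \<bullet> h) + 0 + Dxc x y1 \<bullet> h - 0)) (at x within X)"
      by (intro derivative_intros dx that assms)
    then show ?thesis unfolding g_def by (simp add: inner_diff_left algebra_simps)
  qed
  have gcont: "continuous_on X g" by (rule has_derivative_continuous_on[OF gd])
  define v where "v = Dxc x' y1 - Dxc x' y0"
  have vnz: "v \<noteq> 0"
  proof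
    assume "v = 0"
    then have "- Dxc x' y0 = - Dxc x' y1" unfolding v_def by simp
    then show False using inj_onD[OF inj _ assms(3,4)] assms(5) by blast
  qed
  have gat: "(g has_derivative (\<lambda>h. v \<bullet> h)) (at x')"
    using gd[OF assms(2)] at_within_interior[OF assms(6)] unfolding v_def by simp
  define \<phi> where "\<phi> t = g (x' + t *\<^sub>R (- v))" for t
  have lin: "((\<lambda>t::real. x' + t *\<^sub>R (- v)) has_derivative (\<lambda>t. t *\<^sub>R (- v))) (at 0)"
    by (intro derivative_eq_intros) auto
  have "((\<lambda>t::real. g (x' + t *\<^sub>R (- v))) has_derivative (\<lambda>t. v \<bullet> (t *\<^sub>R (- v)))) (at 0)"
  proof -
    have g0: "(g has_derivative (\<lambda>h. v \<bullet> h)) (at (x' + (0::real) *\<^sub>R (- v)))" using gat by simp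
    show ?thesis by (rule has_derivative_compose[OF lin g0])
  qed
  moreover have "(\<lambda>t::real. v \<bullet> (t *\<^sub>R (- v))) = (*) (- (v \<bullet> v))"
    by (auto simp: fun_eq_iff)
  ultimately have "(\<phi> has_field_derivative (- (v \<bullet> v))) (at 0)"
    unfolding has_field_derivative_def \<phi>_def by (simp add: o_def)
  moreover have "- (v \<bullet> v) < 0" using vnz by simp
  ultimately obtain d where d: "d > 0" "\<And>h. h > 0 \<Longrightarrow> h < d \<Longrightarrow> \<phi> 0 > \<phi> (0 + h)"
    using DERIV_neg_dec_right by blast
  obtain e where e: "e > 0" "ball x' e \<subseteq> interior X"
    using assms(6) open_interior open_contains_ball by blast
  define h where "h = min d (e / norm v) / 2"
  have hpos: "h > 0" "h < d" using d e vnz by (auto simp: h_def)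
  have "e / norm v > 0" using e vnz by simp
  then have "h < e / norm v" unfolding h_def by (rule half_min_lt)
  moreover have "norm v > 0" using vnz by simp
  ultimately have "h * norm v < e" using pos_less_divide_eq by blast
  then have p: "x' + h *\<^sub>R (- v) \<in> interior X"
  proof -
    have "dist x' (x' + h *\<^sub>R (- v)) = norm (h *\<^sub>R v)" by (simp add: dist_norm)
    also have "\<dots> = \<bar>h\<bar> * norm v" by (rule norm_scaleR)
    also have "\<bar>h\<bar> = h" using hpos(1) by (rule abs_of_pos)
    finally have "dist x' (x' + h *\<^sub>R (- v)) < e" using \<open>h * norm v < e\<close> by linarith
    then have "x' + h *\<^sub>R (- v) \<in> ball x' e" by (rule iffD2[OF mem_ball])
    then show ?thesis using e(2) by blast
  qed
  have "\<phi> 0 = 0" by (simp add: \<phi>_def g_def)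
  then have "\<phi> (0 + h) < 0" using d(2)[OF hpos] by linarith
  then have gp: "g (x' + h *\<^sub>R (- v)) < 0" unfolding \<phi>_def by simp
  define U where "U = g -` {..<0} \<inter> interior X"
  have "continuous_on (interior X) g"
    by (rule continuous_on_subset[OF gcont interior_subset])
  then have "open U" unfolding U_def
    using continuous_on_open_vimage[OF open_interior, of X g] open_lessThan[of "0::real"] by blast
  moreover have "U \<subseteq> {x \<in> X. - c x y0 + c x' y0 \<le> - c x y1 + c x' y1}"
  proof
    fix x assume "x \<in> U"
    then have "x \<in> X" "g x < 0" using interior_subset unfolding U_def by auto
    then show "x \<in> {x \<in> X. - c x y0 + c x' y0 \<le> - c x y1 + c x' y1}"
      unfolding g_def by simp
  qed
  ultimately have "U \<subseteq> interior {x \<in> X. - c x y0 + c x' y0 \<le> - c x y1 + c x' y1}"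
    by (rule interior_maximal[rotated])
  moreover have "x' + h *\<^sub>R (- v) \<in> U" using p gp by (simp add: U_def)
  ultimately show ?thesis by blast
qed

end
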